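(* Consider the two-layer multi-item order fulfillment problem described in the context with a single FDC ($K=1$). Let an algorithm produce a feasible plan $\{m_{k,t}^i\}$ with FDC inventories $I_{1,t}^i=I_{1,0}^i-\sum_{\tau\le t}m_{1,\tau}^i$, and let $\hat m_{1,t}^i=\min\{S_t^i,I_{1,t-1}^i\}$. Suppose that for every $i$ and $t$, either $m_{1,t}^i=\hat m_{1,t}^i$ or $m_{1,t}^i=0$. Let $\{m_{k,t}^{i,*}\}$ be an optimal offline plan. Fix an item $i$ and let $C_i=\{t:m_{1,t}^i>0\}$. Then for every set $B\subseteq[T]$ with $B\supseteq C_i$, \[\sum_{t\in B}\hat m_{1,t}^i\ \ge\ \sum_{t\in B}m_{1,t}^{i,*}.\]
   Context: Problem with one FDC (index $1$) and one RDC (index $0$, unlimited inventory). The FDC initially holds $I_{1,0}^i\ge0$ units of item $i\in[n]$, never replenished. In periods $t=1,\dots,T$ an order $\boldsymbol S_t=(S_t^i)_i$ of nonnegative integers arrives with variable costs $c_{k,t}^i$; a feasible plan chooses $m_{0,t}^i,m_{1,t}^i\ge0$ with $m_{0,t}^i+m_{1,t}^i=S_t^i$ and $\sum_{\tau\le t}m_{1,\tau}^i\le I_{1,0}^i$. The period cost is $\sum_{k=0,1}[f_k\mathbb{I}(\sum_im_{k,t}^i>0)+\sum_ic_{k,t}^im_{k,t}^i]$; an optimal offline plan minimizes total cost over all feasible plans with full knowledge of the instance. *)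

theory Defs
  imports Complex_Main
begin

text \<open>A plan is m k t i : units of item i in period t fulfilled from node k
  (k = 0: RDC, k = 1: FDC). Items are 1..n, periods 1..T.\<close>

definition feasible_plan ::
  "nat \<Rightarrow> nat \<Rightarrow> (nat \<Rightarrow> nat) \<Rightarrow> (nat \<Rightarrow> nat \<Rightarrow> nat)
   \<Rightarrow> (nat \<Rightarrow> nat \<Rightarrow> nat \<Rightarrow> nat) \<Rightarrow> bool" where
  "feasible_plan n T I0 S m \<longleftrightarrow>
     (\<forall>t\<in>{1..T}. \<forall>i\<in>{1..n}. m 0 t i + m 1 t i = S t i) \<and>
     (\<forall>t\<in>{1..T}. \<forall>i\<in>{1..n}. (\<Sum>\<tau>\<in>{1..t}. m 1 \<tau> i) \<le> I0 i)"

definition plan_cost ::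
  "nat \<Rightarrow> nat \<Rightarrow> (nat \<Rightarrow> real) \<Rightarrow> (nat \<Rightarrow> nat \<Rightarrow> nat \<Rightarrow> real)
   \<Rightarrow> (nat \<Rightarrow> nat \<Rightarrow> nat \<Rightarrow> nat) \<Rightarrow> real" where
  "plan_cost n T f c m =
     (\<Sum>t\<in>{1..T}. \<Sum>k\<in>{0,1::nat}.
        (f k * (if (\<Sum>i\<in>{1..n}. m k t i) > 0 then 1 else 0)
         + (\<Sum>i\<in>{1..n}. c k t i * real (m k t i))))"

definition optimal_offline_plan ::
  "nat \<Rightarrow> nat \<Rightarrow> (nat \<Rightarrow> nat) \<Rightarrow> (nat \<Rightarrow> nat \<Rightarrow> nat) \<Rightarrow> (nat \<Rightarrow> real)
   \<Rightarrow> (nat \<Rightarrow> nat \<Rightarrow> nat \<Rightarrow> real) \<Rightarrow> (nat \<Rightarrow> nat \<Rightarrow> nat \<Rightarrow> nat) \<Rightarrow> bool" where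
  "optimal_offline_plan n T I0 S f c m \<longleftrightarrow>
     feasible_plan n T I0 S m \<and>
     (\<forall>m'. feasible_plan n T I0 S m' \<longrightarrow> plan_cost n T f c m \<le> plan_cost n T f c m')"

definition fdc_inv :: "(nat \<Rightarrow> nat) \<Rightarrow> (nat \<Rightarrow> nat \<Rightarrow> nat \<Rightarrow> nat) \<Rightarrow> nat \<Rightarrow> nat \<Rightarrow> int" where
  "fdc_inv I0 m t i = int (I0 i) - (\<Sum>\<tau>\<in>{1..t}. int (m 1 \<tau> i))"

definition hat_m :: "(nat \<Rightarrow> nat) \<Rightarrow> (nat \<Rightarrow> nat \<Rightarrow> nat) \<Rightarrow> (nat \<Rightarrow> nat \<Rightarrow> nat \<Rightarrow> nat) \<Rightarrow> nat \<Rightarrow> nat \<Rightarrow> int" where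
  "hat_m I0 S m t i = min (int (S t i)) (fdc_inv I0 m (t - 1) i)"

end

theory Submission
  imports Defs
begin

theorem mainTheorem13:
  fixes n T :: nat and I0 :: "nat \<Rightarrow> nat" and S :: "nat \<Rightarrow> nat \<Rightarrow> nat"
    and f :: "nat \<Rightarrow> real" and c :: "nat \<Rightarrow> nat \<Rightarrow> nat \<Rightarrow> real"
    and m mstar :: "nat \<Rightarrow> nat \<Rightarrow> nat \<Rightarrow> nat" and i :: nat and B :: "nat set"
  assumes feas: "feasible_plan n T I0 S m"
    and allnone: "\<forall>j\<in>{1..n}. \<forall>t\<in>{1..T}. int (m 1 t j) = hat_m I0 S m t j \<or> m 1 t j = 0"
    and opt: "optimal_offline_plan n T I0 S f c mstar"
    and i: "i \<in> {1..n}"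
    and B: "B \<subseteq> {1..T}"
    and CB: "{t \<in> {1..T}. m 1 t i > 0} \<subseteq> B"
  shows "(\<Sum>t\<in>B. hat_m I0 S m t i) \<ge> (\<Sum>t\<in>B. int (mstar 1 t i))"
proof -
  define C where "C = {t \<in> {1..T}. m 1 t i > 0}"
  define h where "h t = hat_m I0 S m t i" for t
  have inv: "fdc_inv I0 m t i \<ge> 0" if "t \<le> T" for t
  proof (cases "t = 0")
    case True then show ?thesis by (simp add: fdc_inv_def)
  next
    case False
    then have "(\<Sum>\<tau>\<in>{1..t}. m 1 \<tau> i) \<le> I0 i" using feas i that
      unfolding feasible_plan_def by auto
    then have "(\<Sum>\<tau>\<in>{1..t}. int (m 1 \<tau> i)) \<le> int (I0 i)"
      by (metis of_nat_le_iff of_nat_sum)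
    then show ?thesis by (simp add: fdc_inv_def)
  qed
  have hnn: "h t \<ge> 0" if "1 \<le> t" "t \<le> T" for t
    using inv[of "t - 1"] that by (simp add: h_def hat_m_def)
  have mC: "int (m 1 t i) = h t" if "t \<in> C" for t
  proof -
    have "t \<in> {1..T}" "m 1 t i > 0" using that by (auto simp: C_def)
    then show ?thesis using allnone i unfolding h_def by fastforce
  qed
  have key: "\<forall>B'. B' \<subseteq> {1..k} \<longrightarrow> C \<inter> {1..k} \<subseteq> B' \<longrightarrow>
      (\<Sum>t\<in>B'. h t) \<ge> min (int (\<Sum>t\<in>B'. S t i)) (int (I0 i))" if "k \<le> T" for k
    using that
  proof (induction k)
    case 0
    then show ?case by auto
  next
    case (Suc k)
    show ?case
    proof (intro allI impI)
      fix B' assume B1: "B' \<subseteq> {1..Suc k}" and B2: "C \<inter> {1..Suc k} \<subseteq> B'"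
      show "(\<Sum>t\<in>B'. h t) \<ge> min (int (\<Sum>t\<in>B'. S t i)) (int (I0 i))"
      proof (cases "Suc k \<in> B'")
        case False
        then have "B' \<subseteq> {1..k}" using B1 by (auto simp: le_Suc_eq)
        moreover have "C \<inter> {1..k} \<subseteq> B'" using B2 by auto
        ultimately show ?thesis using Suc by auto
      next
        case True
        define B0 where "B0 = B' - {Suc k}"
        have B0s: "B0 \<subseteq> {1..k}" using B1 by (auto simp: B0_def le_Suc_eq)
        have B0C: "C \<inter> {1..k} \<subseteq> B0" using B2 by (auto simp: B0_def)
        have fin0: "finite B0" using B0s finite_subset by blast
        have IH: "(\<Sum>t\<in>B0. h t) \<ge> min (int (\<Sum>t\<in>B0. S t i)) (int (I0 i))"
          using Suc B0s B0C by auto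
        have eqB: "B' = insert (Suc k) B0" "Suc k \<notin> B0" using True by (auto simp: B0_def)
        define X where "X = (\<Sum>\<tau>\<in>{1..k}. int (m 1 \<tau> i))"
        have "X = (\<Sum>\<tau>\<in>C \<inter> {1..k}. int (m 1 \<tau> i))"
          unfolding X_def
          by (rule sum.mono_neutral_right) (use Suc.prems in \<open>auto simp: C_def\<close>)
        also have "\<dots> = (\<Sum>\<tau>\<in>C \<inter> {1..k}. h \<tau>)" using mC by simp
        also have "\<dots> \<le> (\<Sum>t\<in>B0. h t)"
          by (rule sum_mono2[OF fin0 B0C]) (use B0s Suc.prems hnn in auto)
        finally have XH: "X \<le> (\<Sum>t\<in>B0. h t)" .
        have hk: "h (Suc k) = min (int (S (Suc k) i)) (int (I0 i) - X)"
          by (simp add: h_def hat_m_def fdc_inv_def X_def)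
        have "(\<Sum>t\<in>B'. h t) = (\<Sum>t\<in>B0. h t) + h (Suc k)"
          using eqB fin0 by simp
        moreover have "int (\<Sum>t\<in>B'. S t i) = int (\<Sum>t\<in>B0. S t i) + int (S (Suc k) i)"
          using eqB fin0 by simp
        ultimately show ?thesis using IH XH hk by linarith
      qed
    qed
  qed
  have finB: "finite B" using B finite_subset by blast
  have K: "(\<Sum>t\<in>B. h t) \<ge> min (int (\<Sum>t\<in>B. S t i)) (int (I0 i))"
    using key[of T] B CB unfolding C_def by auto
  have fs: "feasible_plan n T I0 S mstar" using opt by (simp add: optimal_offline_plan_def)
  have s1: "(\<Sum>t\<in>B. int (mstar 1 t i)) \<le> int (\<Sum>t\<in>B. S t i)"
  proof -
    have "(\<Sum>t\<in>B. int (mstar 1 t i)) \<le> (\<Sum>t\<in>B. int (S t i))"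
    proof (rule sum_mono)
      fix t assume "t \<in> B"
      then have "mstar 0 t i + mstar 1 t i = S t i" using fs B i unfolding feasible_plan_def by auto
      then show "int (mstar 1 t i) \<le> int (S t i)" by linarith
    qed
    then show ?thesis by simp
  qed
  have s2: "(\<Sum>t\<in>B. int (mstar 1 t i)) \<le> int (I0 i)"
  proof (cases "T = 0")
    case True then have "B = {}" using B by auto
    then show ?thesis by simp
  next
    case False
    have "(\<Sum>t\<in>B. int (mstar 1 t i)) \<le> (\<Sum>t\<in>{1..T}. int (mstar 1 t i))"
      by (rule sum_mono2) (use B in auto)
    also have "\<dots> = int (\<Sum>t\<in>{1..T}. mstar 1 t i)" by simp
    also have "\<dots> \<le> int (I0 i)"
    proof -
      have "T \<in> {1..T}" using False by auto
      then have "(\<Sum>t\<in>{1..T}. mstar 1 t i) \<le> I0 i" using fs i unfolding feasible_plan_def by blast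
      then show ?thesis by (metis of_nat_le_iff)
    qed
    finally show ?thesis .
  qed
  show ?thesis using K s1 s2 unfolding h_def by linarith
qed

end
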